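(* $\mathfrak{b}\leq\mathfrak{a}(conv)$.
   Context: $conv$ is the ideal on $\mathbb{Q}\cap[0,1]$ generated by (the ranges of) sequences in $\mathbb{Q}\cap[0,1]$ which converge in $[0,1]$, i.e. $A\in conv$ iff $A$ is covered by finitely many convergent sequences (together with a finite set). For an ideal $\mathcal{J}$ on a countable set, $\mathfrak{a}(\mathcal{J})$ is the smallest size of an uncountable family $\mathcal{A}$ of $\mathcal{J}$-positive sets (sets not in $\mathcal{J}$) which is maximal with respect to the property that $A\cap B\in\mathcal{J}$ for all distinct $A,B\in\mathcal{A}$. $\mathfrak{b}$ is the bounding number. *)

theory Defs
  imports Complex_Main "HOL-Library.Countable_Set"
begin

definition Q01 :: "rat set" where
  "Q01 = {q. 0 \<le> q \<and> q \<le> 1}"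

definition conv_seq :: "(nat \<Rightarrow> rat) \<Rightarrow> bool" where
  "conv_seq s \<longleftrightarrow> range s \<subseteq> Q01 \<and> convergent (\<lambda>n. real_of_rat (s n))"

definition conv_ideal :: "rat set set" where
  "conv_ideal = {A. A \<subseteq> Q01 \<and> (\<exists>S F. finite S \<and> finite F \<and> (\<forall>s\<in>S. conv_seq s)
                       \<and> A \<subseteq> F \<union> (\<Union>s\<in>S. range s))}"

definition positive_for :: "'a set \<Rightarrow> 'a set set \<Rightarrow> 'a set \<Rightarrow> bool" where
  "positive_for X J A \<longleftrightarrow> A \<subseteq> X \<and> A \<notin> J"

definition uncountable_MAD :: "'a set \<Rightarrow> 'a set set \<Rightarrow> 'a set set \<Rightarrow> bool" where
  "uncountable_MAD X J \<A> \<longleftrightarrow>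
     \<not> countable \<A> \<and>
     (\<forall>A\<in>\<A>. positive_for X J A) \<and>
     (\<forall>A\<in>\<A>. \<forall>B\<in>\<A>. A \<noteq> B \<longrightarrow> A \<inter> B \<in> J) \<and>
     (\<forall>B. positive_for X J B \<and> B \<notin> \<A> \<longrightarrow> (\<exists>A\<in>\<A>. A \<inter> B \<notin> J))"

definition unbounded_family :: "(nat \<Rightarrow> nat) set \<Rightarrow> bool" where
  "unbounded_family F \<longleftrightarrow> \<not> (\<exists>g. \<forall>f\<in>F. \<forall>\<^sub>F n in sequentially. f n \<le> g n)"

end

theory Submission
  imports Defs "HOL-Analysis.Analysis"
begin


lemma conv_iff: "A \<in> conv_ideal \<longleftrightarrow> A \<subseteq> Q01 \<and> (\<exists>S F. finite S \<and> finite F \<and> (\<forall>s\<in>S. conv_seq s)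
                       \<and> A \<subseteq> F \<union> (\<Union>s\<in>S. range s))"
  unfolding conv_ideal_def by simp

lemma conv_subset: assumes "B \<in> conv_ideal" "A \<subseteq> B" shows "A \<in> conv_ideal"
proof -
  obtain S F where 1: "finite S" "finite F" "\<forall>s\<in>S. conv_seq s" "B \<subseteq> F \<union> (\<Union>s\<in>S. range s)" "B \<subseteq> Q01"
    using assms(1) unfolding conv_iff by blast
  have "A \<subseteq> F \<union> (\<Union>s\<in>S. range s)" "A \<subseteq> Q01" using 1 assms(2) by auto
  then show ?thesis unfolding conv_iff using 1 by blast
qed

lemma conv_Un: assumes "A \<in> conv_ideal" "B \<in> conv_ideal" shows "A \<union> B \<in> conv_ideal"
proof -
  obtain S F where 1: "finite S" "finite F" "\<forall>s\<in>S. conv_seq s" "A \<subseteq> F \<union> (\<Union>s\<in>S. range s)" "A \<subseteq> Q01"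
    using assms(1) unfolding conv_iff by blast
  obtain S' F' where 2: "finite S'" "finite F'" "\<forall>s\<in>S'. conv_seq s" "B \<subseteq> F' \<union> (\<Union>s\<in>S'. range s)" "B \<subseteq> Q01"
    using assms(2) unfolding conv_iff by blast
  have "A \<union> B \<subseteq> (F \<union> F') \<union> (\<Union>s\<in>S \<union> S'. range s)" using 1(4) 2(4) by auto
  moreover have "finite (S \<union> S')" "finite (F \<union> F')" "\<forall>s\<in>S \<union> S'. conv_seq s" "A \<union> B \<subseteq> Q01"
    using 1 2 by auto
  ultimately show ?thesis unfolding conv_iff by blast
qed

lemma conv_empty: "{} \<in> conv_ideal"
  unfolding conv_iff by auto

lemma conv_UN: "finite I \<Longrightarrow> (\<forall>i\<in>I. X i \<in> conv_ideal) \<Longrightarrow> (\<Union>i\<in>I. X i) \<in> conv_ideal"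
  by (induction rule: finite_induct) (auto simp: conv_empty conv_Un)

lemma conv_finite: assumes "finite A" "A \<subseteq> Q01" shows "A \<in> conv_ideal"
proof -
  have "A \<subseteq> A \<union> (\<Union>s\<in>{}. range s)" by simp
  then show ?thesis unfolding conv_iff using assms by blast
qed

lemma conv_range: assumes "conv_seq s" shows "range s \<in> conv_ideal"
proof -
  have "range s \<subseteq> {} \<union> (\<Union>s\<in>{s}. range s)" by simp
  moreover have "range s \<subseteq> Q01" using assms conv_seq_def by blast
  ultimately show ?thesis unfolding conv_iff using assms by blast
qed

abbreviation R :: "rat set \<Rightarrow> real set" where "R X \<equiv> real_of_rat ` X"

lemma conv_approach:
  assumes X: "X \<subseteq> Q01" and fin: "\<forall>e>0. finite {x\<in>X. e \<le> \<bar>real_of_rat x - w\<bar>}"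
  shows "X \<in> conv_ideal"
proof (cases "finite X")
  case True then show ?thesis using conv_finite X by blast
next
  case False
  have cX: "countable X" by (rule countable_subset[of _ UNIV]) auto
  define s where "s = from_nat_into X"
  have bij: "bij_betw s UNIV X" unfolding s_def using bij_betw_from_nat_into[OF cX False] .
  have "(\<lambda>n. real_of_rat (s n)) \<longlonglongrightarrow> w"
  proof (rule tendstoI)
    fix e :: real assume e: "e > 0"
    have "finite (s -` {x\<in>X. e \<le> \<bar>real_of_rat x - w\<bar>})"
      using finite_vimageI[OF fin[rule_format, OF e]] bij bij_betw_imp_inj_on by blast
    moreover have "{n. e \<le> \<bar>real_of_rat (s n) - w\<bar>} \<subseteq> s -` {x\<in>X. e \<le> \<bar>real_of_rat x - w\<bar>}"
      using bij_betw_apply[OF bij] by auto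
    ultimately have "\<forall>\<^sub>F n in cofinite. \<not> (e \<le> \<bar>real_of_rat (s n) - w\<bar>)"
      unfolding eventually_cofinite using finite_subset by auto
    then show "\<forall>\<^sub>F n in sequentially. dist (real_of_rat (s n)) w < e"
      by (simp add: cofinite_eq_sequentially dist_real_def eventually_mono)
  qed
  then have "conv_seq s" unfolding conv_seq_def using bij X bij_betw_imp_surj_on convergent_def by blast
  then show ?thesis using conv_range bij bij_betw_imp_surj_on by metis
qed

lemma lim_range: fixes s :: "nat \<Rightarrow> real"
  assumes "s \<longlonglongrightarrow> L" "p islimpt range s" shows "p = L"
proof (rule ccontr)
  assume ne: "p \<noteq> L"
  define d where "d = dist p L / 2"
  have d: "d > 0" using ne unfolding d_def by simp
  obtain N where N: "\<forall>n\<ge>N. dist (s n) L < d" using assms(1) d unfolding LIMSEQ_def by blast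
  have "range s \<subseteq> s ` {..<N} \<union> (- ball p d)"
  proof
    fix x assume "x \<in> range s" then obtain n where x: "x = s n" by blast
    show "x \<in> s ` {..<N} \<union> (- ball p d)"
    proof (cases "n < N")
      case False then have "dist (s n) L < d" using N by simp
      then have "x \<notin> ball p d" using x d_def dist_triangle[of p L "s n"]
        by (auto simp: dist_commute)
      then show ?thesis by blast
    next
      case True then show ?thesis using x by blast
    qed
  qed
  moreover have "\<not> p islimpt s ` {..<N}" by (rule islimpt_finite) auto
  moreover have "\<not> p islimpt (- ball p d)"
    unfolding islimpt_def using d by (metis ComplD centre_in_ball open_ball)
  ultimately have "\<not> p islimpt (s ` {..<N} \<union> (- ball p d))" unfolding islimpt_Un by blast
  then show False using assms(2) islimpt_subset \<open>range s \<subseteq> _\<close> by blast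
qed


lemma conv_lp:
  assumes "X \<in> conv_ideal" shows "\<exists>P. finite P \<and> (\<forall>p. p islimpt R X \<longrightarrow> p \<in> P)"
proof -
  obtain S F where 1: "finite S" "finite F" "\<forall>s\<in>S. conv_seq s" "X \<subseteq> F \<union> (\<Union>s\<in>S. range s)"
    using assms unfolding conv_iff by blast
  define P where "P = (\<lambda>s. lim (\<lambda>n. real_of_rat (s n))) ` S"
  have "\<forall>p. p islimpt R X \<longrightarrow> p \<in> P"
  proof (intro allI impI)
    fix p assume p: "p islimpt R X"
    have "R X \<subseteq> R F \<union> (\<Union>s\<in>S. range (\<lambda>n. real_of_rat (s n)))" using 1(4) by auto
    then have "p islimpt R F \<union> (\<Union>s\<in>S. range (\<lambda>n. real_of_rat (s n)))" using p islimpt_subset by blast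
    moreover have "\<not> p islimpt R F" using 1(2) islimpt_finite by blast
    ultimately have "p islimpt (\<Union>s\<in>S. range (\<lambda>n. real_of_rat (s n)))" unfolding islimpt_Un by blast
    then obtain s where s: "s \<in> S" "p islimpt range (\<lambda>n. real_of_rat (s n))"
      using islimpt_finite_union_iff[OF 1(1), of p "\<lambda>s. range (\<lambda>n. real_of_rat (s n))"] by blast
    have "convergent (\<lambda>n. real_of_rat (s n))" using 1(3) s(1) conv_seq_def by blast
    then have "(\<lambda>n. real_of_rat (s n)) \<longlonglongrightarrow> lim (\<lambda>n. real_of_rat (s n))"
      using convergent_LIMSEQ_iff by blast
    then have "p = lim (\<lambda>n. real_of_rat (s n))" using lim_range s(2) by blast
    then show "p \<in> P" unfolding P_def using s(1) by blast
  qed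
  then show ?thesis using 1(1) P_def by blast
qed

lemma R_Q01: "X \<subseteq> Q01 \<Longrightarrow> R X \<subseteq> {0..1}"
  unfolding Q01_def by auto

lemma lp_bound: assumes "X \<subseteq> Q01" "p islimpt R X" shows "p \<in> {0..1}"
  using assms R_Q01 closed_limpt islimpt_subset closed_atLeastAtMost by metis

lemma inj_R: "inj_on real_of_rat A"
  by (simp add: inj_on_def)

lemma only_limpt:
  assumes X: "X \<subseteq> Q01" and lim: "\<forall>p. p islimpt R X \<longrightarrow> p = x"
  shows "X \<in> conv_ideal"
proof (rule conv_approach[OF X, of x], intro allI impI)
  fix e :: real assume e: "e > 0"
  define Z where "Z = {q\<in>X. e \<le> \<bar>real_of_rat q - x\<bar>}"
  show "finite Z"
  proof (rule ccontr)
    assume "infinite Z"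
    then have inf: "infinite (R Z)" using finite_imageD inj_R by blast
    have "R Z \<subseteq> {0..1}" using R_Q01 X Z_def by blast
    then have "bounded (R Z)" using bounded_closed_interval bounded_subset by blast
    then obtain q where q: "q islimpt R Z" using bounded_infinite_imp_islimpt inf by blast
    have "R Z \<subseteq> R X" unfolding Z_def by blast
    then have "q = x" using lim q islimpt_subset by blast
    have sub: "R Z \<subseteq> - ball x e" unfolding Z_def by (auto simp: dist_real_def)
    have "closed (- ball x e)" by auto
    then have "q \<in> - ball x e" using q sub closed_limpt islimpt_subset by blast
    then show False using \<open>q = x\<close> e by simp
  qed
qed

lemma fin_limpt:
  assumes "finite P" shows "\<forall>X. X \<subseteq> Q01 \<longrightarrow> (\<forall>p. p islimpt R X \<longrightarrow> p \<in> P) \<longrightarrow> X \<in> conv_ideal"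
  using assms
proof (induction rule: finite_induct)
  case empty
  show ?case
  proof (intro allI impI)
    fix X assume X: "X \<subseteq> Q01" "\<forall>p. p islimpt R X \<longrightarrow> p \<in> {}"
    have "finite X"
    proof (rule ccontr)
      assume "infinite X"
      then have inf: "infinite (R X)" using finite_imageD inj_R by blast
      have "bounded (R X)" using R_Q01[OF X(1)] bounded_closed_interval bounded_subset by blast
      then show False using bounded_infinite_imp_islimpt inf X(2) by blast
    qed
    then show "X \<in> conv_ideal" using conv_finite X(1) by blast
  qed
next
  case (insert x P)
  show ?case
  proof (intro allI impI)
    fix X assume X: "X \<subseteq> Q01" "\<forall>p. p islimpt R X \<longrightarrow> p \<in> insert x P"
    obtain d where d: "d > 0" "\<forall>y\<in>P. y \<noteq> x \<longrightarrow> d \<le> dist x y"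
      using finite_set_avoid[OF insert(1)] by blast
    define X1 where "X1 = {q\<in>X. \<bar>real_of_rat q - x\<bar> < d/2}"
    define X2 where "X2 = X - X1"
    have "X2 \<in> conv_ideal"
    proof -
      have "\<forall>p. p islimpt R X2 \<longrightarrow> p \<in> P"
      proof (intro allI impI)
        fix p assume p: "p islimpt R X2"
        have "R X2 \<subseteq> R X" unfolding X2_def by blast
        then have p1: "p \<in> insert x P" using p X(2) islimpt_subset by blast
        have sub: "R X2 \<subseteq> - ball x (d/2)" unfolding X2_def X1_def by (auto simp: dist_real_def abs_minus_commute)
        have "closed (- ball x (d/2))" by auto
        then have "p \<in> - ball x (d/2)" using p sub closed_limpt islimpt_subset by blast
        then have "p \<noteq> x" using d by auto
        then show "p \<in> P" using p1 by blast
      qed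
      then show ?thesis using insert(3) X(1) unfolding X2_def by blast
    qed
    moreover have "X1 \<in> conv_ideal"
    proof (rule only_limpt[of _ x])
      show "X1 \<subseteq> Q01" using X(1) X1_def by blast
      show "\<forall>p. p islimpt R X1 \<longrightarrow> p = x"
      proof (intro allI impI)
        fix p assume p: "p islimpt R X1"
        have "R X1 \<subseteq> R X" unfolding X1_def by blast
        then have p1: "p \<in> insert x P" using p X(2) islimpt_subset by blast
        have sub: "R X1 \<subseteq> cball x (d/2)" unfolding X1_def by (auto simp: dist_real_def abs_minus_commute)
        have "closed (cball x (d/2))" by auto
        then have "p \<in> cball x (d/2)" using p sub closed_limpt islimpt_subset by blast
        then have "dist x p \<le> d/2" by auto
        then show "p = x" using p1 d by force
      qed
    qed
    moreover have "X = X1 \<union> X2" unfolding X2_def X1_def by blast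
    ultimately show "X \<in> conv_ideal" using conv_Un by metis
  qed
qed

lemma pos_lp: assumes "X \<subseteq> Q01" "X \<notin> conv_ideal" shows "infinite {p. p islimpt R X}"
  using fin_limpt[of "{p. p islimpt R X}"] assms by blast



lemma inv_small: "(e::real) > 0 \<Longrightarrow> \<exists>N. \<forall>n\<ge>N. inverse (real (Suc n)) < e"
proof -
  assume "e > 0"
  then obtain N where N: "inverse (real (Suc N)) < e" using reals_Archimedean by blast
  have "\<forall>n\<ge>N. inverse (real (Suc n)) \<le> inverse (real (Suc N))"
    by (auto intro!: le_imp_inverse_le)
  then show ?thesis using N order.strict_trans1 by blast
qed

theorem mainTheorem3:
  assumes "uncountable_MAD Q01 conv_ideal \<A>"
  shows "\<exists>F. unbounded_family F \<and> (card_of F, card_of \<A>) \<in> ordLeq"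
proof -
  have unc: "\<not> countable \<A>" and pos: "\<forall>A\<in>\<A>. A \<subseteq> Q01 \<and> A \<notin> conv_ideal"
    and ad: "\<forall>A\<in>\<A>. \<forall>B\<in>\<A>. A \<noteq> B \<longrightarrow> A \<inter> B \<in> conv_ideal"
    and mx: "\<forall>B. B \<subseteq> Q01 \<and> B \<notin> conv_ideal \<and> B \<notin> \<A> \<longrightarrow> (\<exists>A\<in>\<A>. A \<inter> B \<notin> conv_ideal)"
    using assms unfolding uncountable_MAD_def positive_for_def by auto
  have "infinite \<A>" using unc countable_finite by blast
  then obtain As :: "nat \<Rightarrow> rat set" where As: "inj As" "range As \<subseteq> \<A>"
    using infinite_countable_subset by blast
  define D where "D n = As n - (\<Union>m<n. As m)" for n
  have DQ: "D n \<subseteq> Q01" for n using As pos unfolding D_def by blast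
  have Dpos: "D n \<notin> conv_ideal" for n
  proof
    assume "D n \<in> conv_ideal"
    moreover have "(\<Union>m\<in>{..<n}. As n \<inter> As m) \<in> conv_ideal"
    proof (intro conv_UN ballI)
      fix m assume "m \<in> {..<n}"
      then have "As n \<noteq> As m" using As(1) by (metis inj_eq less_not_refl lessThan_iff)
      then show "As n \<inter> As m \<in> conv_ideal" using ad As by blast
    qed auto
    ultimately have "D n \<union> (\<Union>m\<in>{..<n}. As n \<inter> As m) \<in> conv_ideal" by (rule conv_Un)
    moreover have "As n \<subseteq> D n \<union> (\<Union>m\<in>{..<n}. As n \<inter> As m)" unfolding D_def by blast
    ultimately have "As n \<in> conv_ideal" by (rule conv_subset)
    moreover have "As n \<in> \<A>" using As(2) by blast
    ultimately show False using pos by blast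
  qed
  define L where "L n = {p. p islimpt R (D n)}" for n
  have Linf: "infinite (L n)" for n unfolding L_def by (rule pos_lp[OF DQ Dpos])
  have L01: "L n \<subseteq> {0..1}" for n unfolding L_def by (auto intro: lp_bound[OF DQ])
  have "\<forall>n. \<exists>v. v islimpt L n"
  proof
    fix n
    have "bounded (L n)" by (rule bounded_subset[OF bounded_closed_interval L01])
    then obtain v where "v islimpt L n" by (rule bounded_infinite_imp_islimpt[OF subset_refl _ Linf[of n]])
    then show "\<exists>v. v islimpt L n" by blast
  qed
  then have "\<exists>wn. \<forall>n. wn n islimpt L n" by (rule choice)
  then obtain wn where wn: "\<And>n. wn n islimpt L n" by blast
  have wn01: "wn n \<in> {0..1}" for n
  proof -
    have "wn n islimpt {0..1::real}" by (rule islimpt_subset[OF wn L01])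
    then show ?thesis using closed_atLeastAtMost closed_limpt by blast
  qed
  have "bounded (range wn)" by (rule bounded_subset[OF bounded_closed_interval[of 0 1]]) (use wn01 in auto)
  then obtain \<phi> w where phi: "strict_mono \<phi>" and w: "(wn \<circ> \<phi>) \<longlonglongrightarrow> w"
    using bounded_imp_convergent_subsequence[OF \<open>bounded (range wn)\<close>] by blast
  have H: "\<forall>n k. \<exists>z. z \<in> L n \<and> z \<noteq> w \<and> z \<noteq> wn n \<and> dist z (wn n) < inverse (real (Suc k))"
  proof (intro allI)
    fix n k
    have "wn n islimpt insert w (L n - {w})" by (rule islimpt_subset[OF wn]) blast
    then have "wn n islimpt L n - {w}" by (simp only: islimpt_insert)
    then obtain z where "z \<in> L n - {w}" "z \<noteq> wn n" "dist z (wn n) < inverse (real (Suc k))"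
      unfolding islimpt_approachable by (meson of_nat_0_less_iff positive_imp_inverse_positive zero_less_Suc)
    then show "\<exists>z. z \<in> L n \<and> z \<noteq> w \<and> z \<noteq> wn n \<and> dist z (wn n) < inverse (real (Suc k))" by blast
  qed
  have "\<forall>n. \<exists>zn. \<forall>k. zn k \<in> L n \<and> zn k \<noteq> w \<and> zn k \<noteq> wn n \<and> dist (zn k) (wn n) < inverse (real (Suc k))"
    by (intro allI choice) (use H in blast)
  then have "\<exists>z. \<forall>n k. z n k \<in> L n \<and> z n k \<noteq> w \<and> z n k \<noteq> wn n \<and> dist (z n k) (wn n) < inverse (real (Suc k))"
    by (rule choice)
  then obtain z where zz: "\<forall>n k. z n k \<in> L n \<and> z n k \<noteq> w \<and> z n k \<noteq> wn n \<and> dist (z n k) (wn n) < inverse (real (Suc k))"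
    by blast
  have z: "\<And>n k. z n k \<in> L n" "\<And>n k. z n k \<noteq> w" "\<And>n k. z n k \<noteq> wn n"
    "\<And>n k. dist (z n k) (wn n) < inverse (real (Suc k))" using zz by auto
  have zfin: "finite {k. z n k \<in> K}" if K: "finite K" for n K
  proof -
    obtain d where d: "d > 0" "\<forall>v\<in>K. v \<noteq> wn n \<longrightarrow> d \<le> dist (wn n) v"
      using finite_set_avoid[OF K] by blast
    obtain N where N: "\<forall>k\<ge>N. inverse (real (Suc k)) < d" using inv_small d(1) by blast
    have "{k. z n k \<in> K} \<subseteq> {..<N}"
    proof
      fix k assume "k \<in> {k. z n k \<in> K}"
      then have "d \<le> dist (wn n) (z n k)" using d z(3) by auto
      then have "\<not> inverse (real (Suc k)) < d" using z(4)[of n k] by (simp add: dist_commute)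
      show "k \<in> {..<N}"
      proof (rule ccontr)
        assume "k \<notin> {..<N}"
        then have "k \<ge> N" by simp
        then show False using N \<open>\<not> inverse (real (Suc k)) < d\<close> by blast
      qed
    qed
    then show ?thesis by (rule finite_subset) simp
  qed
  define K where "K A n = {k. z n k islimpt R (A \<inter> D n)}" for A n
  define fA where "fA A n = Suc (Max (K A n))" for A n
  have Kfin: "finite (K A n)" if "A \<in> \<A>" "A \<notin> range As" for A n
  proof -
    have "As n \<in> \<A>" using As(2) by blast
    moreover have "A \<noteq> As n" using that(2) by blast
    ultimately have "A \<inter> As n \<in> conv_ideal" using ad that(1) by blast
    moreover have "A \<inter> D n \<subseteq> A \<inter> As n" unfolding D_def by blast
    ultimately have "A \<inter> D n \<in> conv_ideal" by (rule conv_subset)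
    then obtain P where P: "finite P" "\<forall>p. p islimpt R (A \<inter> D n) \<longrightarrow> p \<in> P"
      using conv_lp by blast
    have "K A n \<subseteq> {k. z n k \<in> P}" unfolding K_def using P by blast
    then show ?thesis by (rule finite_subset[OF _ zfin[OF P(1)]])
  qed
  have fAK: "k \<notin> K A n" if "A \<in> \<A>" "A \<notin> range As" "fA A n \<le> k" for A n k
  proof
    assume "k \<in> K A n"
    then have "k \<le> Max (K A n)" using Kfin[OF that(1,2)] Max_ge by blast
    then show False using that(3) unfolding fA_def by simp
  qed
  define F where "F = fA ` \<A>"
  have "unbounded_family F"
    unfolding unbounded_family_def
  proof
    assume "\<exists>g. \<forall>f\<in>F. \<forall>\<^sub>F n in sequentially. f n \<le> g n"
    then obtain g where g: "\<forall>A\<in>\<A>. \<forall>\<^sub>F n in sequentially. fA A n \<le> g n" unfolding F_def by blast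
    define g' where "g' n = max (g n) n" for n
    define y where "y n = z n (g' n)" for n
    have yL: "y n islimpt R (D n)" for n using z(1) unfolding y_def L_def by blast
    have yw: "y n \<noteq> w" for n using z(2) unfolding y_def by blast
    have ywn: "dist (y n) (wn n) < inverse (real (Suc n))" for n
    proof -
      have "inverse (real (Suc (g' n))) \<le> inverse (real (Suc n))"
        unfolding g'_def by (auto intro!: le_imp_inverse_le)
      then show ?thesis using z(4)[of n "g' n"] unfolding y_def by linarith
    qed
    have "\<forall>n i. \<exists>q\<in>D n. real_of_rat q \<noteq> y n \<and> dist (real_of_rat q) (y n) < inverse (real (Suc (n + i)))"
      using yL unfolding islimpt_approachable by simp
    then have H2: "\<forall>n i. \<exists>q. q \<in> D n \<and> real_of_rat q \<noteq> y n \<and> dist (real_of_rat q) (y n) < inverse (real (Suc (n + i)))"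
      by blast
    have "\<forall>n. \<exists>tn. \<forall>i. tn i \<in> D n \<and> real_of_rat (tn i) \<noteq> y n \<and> dist (real_of_rat (tn i)) (y n) < inverse (real (Suc (n + i)))"
      by (intro allI choice) (use H2 in blast)
    then have "\<exists>t. \<forall>n i. t n i \<in> D n \<and> real_of_rat (t n i) \<noteq> y n \<and> dist (real_of_rat (t n i)) (y n) < inverse (real (Suc (n + i)))"
      by (rule choice)
    then obtain t where tt: "\<forall>n i. t n i \<in> D n \<and> real_of_rat (t n i) \<noteq> y n \<and> dist (real_of_rat (t n i)) (y n) < inverse (real (Suc (n + i)))"
      by blast
    have t: "\<And>n i. t n i \<in> D n" "\<And>n i. real_of_rat (t n i) \<noteq> y n"
      "\<And>n i. dist (real_of_rat (t n i)) (y n) < inverse (real (Suc (n + i)))" using tt by auto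
    have tsmall: "dist (real_of_rat (t n i)) (y n) < inverse (real (Suc n))" for n i
    proof -
      have "inverse (real (Suc (n + i))) \<le> inverse (real (Suc n))" by (auto intro!: le_imp_inverse_le)
      then show ?thesis using t(3)[of n i] by linarith
    qed
    have tlim: "(\<lambda>i. real_of_rat (t n i)) \<longlonglongrightarrow> y n" for n
    proof (rule tendstoI)
      fix e :: real assume "e > 0"
      then obtain N where N: "\<forall>i\<ge>N. inverse (real (Suc i)) < e" using inv_small by blast
      have "\<forall>i\<ge>N. dist (real_of_rat (t n i)) (y n) < e"
      proof (intro allI impI)
        fix i assume "i \<ge> N"
        have "inverse (real (Suc (n + i))) \<le> inverse (real (Suc i))" by (auto intro!: le_imp_inverse_le)
        then show "dist (real_of_rat (t n i)) (y n) < e" using t(3)[of n i] N[rule_format, OF \<open>i \<ge> N\<close>] by linarith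
      qed
      then show "\<forall>\<^sub>F i in sequentially. dist (real_of_rat (t n i)) (y n) < e"
        using eventually_sequentially by blast
    qed
    define T where "T n = range (t n)" for n
    have Tconv: "T n \<in> conv_ideal" for n
    proof -
      have "conv_seq (t n)" unfolding conv_seq_def convergent_def using t(1) DQ tlim by blast
      then show ?thesis unfolding T_def by (rule conv_range)
    qed
    have TD: "T n \<subseteq> D n" for n unfolding T_def using t(1) by blast
    have yT: "y n islimpt R (T n)" for n
      unfolding islimpt_approachable
    proof (intro allI impI)
      fix e :: real assume "e > 0"
      then obtain N where "\<forall>i\<ge>N. dist (real_of_rat (t n i)) (y n) < e"
        using tlim[of n] unfolding LIMSEQ_def by blast
      then show "\<exists>x'\<in>R (T n). x' \<noteq> y n \<and> dist x' (y n) < e"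
        using t(2)[of n N] unfolding T_def by blast
    qed
    have ylim: "(\<lambda>j. y (\<phi> j)) \<longlonglongrightarrow> w"
    proof -
      have "(\<lambda>j. y (\<phi> j) - wn (\<phi> j)) \<longlonglongrightarrow> 0"
      proof (rule Lim_null_comparison)
        show "\<forall>\<^sub>F j in sequentially. norm (y (\<phi> j) - wn (\<phi> j)) \<le> inverse (real (Suc j))"
        proof (rule always_eventually, rule allI)
          fix j
          have hj: "inverse (real (Suc (\<phi> j))) \<le> inverse (real (Suc j))"
            using seq_suble[OF phi, of j] by (auto intro!: le_imp_inverse_le)
          have "norm (y (\<phi> j) - wn (\<phi> j)) < inverse (real (Suc (\<phi> j)))"
            using ywn[of "\<phi> j"] by (simp only: dist_norm)
          then show "norm (y (\<phi> j) - wn (\<phi> j)) \<le> inverse (real (Suc j))"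
            using hj by linarith
        qed
        show "(\<lambda>j. inverse (real (Suc j))) \<longlonglongrightarrow> 0" by (rule LIMSEQ_inverse_real_of_nat)
      qed
      then have "(\<lambda>j. (y (\<phi> j) - wn (\<phi> j)) + wn (\<phi> j)) \<longlonglongrightarrow> 0 + w"
        using w tendsto_add unfolding o_def by blast
      then show ?thesis by simp
    qed
    define B where "B = (\<Union>j. T (\<phi> j))"
    have BQ: "B \<subseteq> Q01" unfolding B_def using TD DQ by blast
    have Bpos: "B \<notin> conv_ideal"
    proof
      assume "B \<in> conv_ideal"
      then obtain P where P: "finite P" "\<forall>p. p islimpt R B \<longrightarrow> p \<in> P" using conv_lp by blast
      have yP: "y (\<phi> j) \<in> P" for j
      proof -
        have "R (T (\<phi> j)) \<subseteq> R B" unfolding B_def by blast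
        then show ?thesis using yT P(2) islimpt_subset by blast
      qed
      obtain d where d: "d > 0" "\<forall>v\<in>P. v \<noteq> w \<longrightarrow> d \<le> dist w v"
        using finite_set_avoid[OF P(1)] by blast
      obtain N where "\<forall>j\<ge>N. dist (y (\<phi> j)) w < d" using ylim d(1) unfolding LIMSEQ_def by blast
      then have "dist (y (\<phi> N)) w < d" by blast
      moreover have "d \<le> dist w (y (\<phi> N))" using d(2) yP yw by blast
      ultimately show False by (simp add: dist_commute)
    qed
    have BA: "A \<inter> B \<in> conv_ideal" if A: "A \<in> \<A>" for A
    proof (cases "A \<in> range As")
      case True
      then obtain m where m: "A = As m" by blast
      have "A \<inter> B \<subseteq> (\<Union>n\<in>{..m}. T n)"
      proof
        fix q assume q: "q \<in> A \<inter> B"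
        then obtain j where j: "q \<in> T (\<phi> j)" unfolding B_def by blast
        have "\<phi> j \<le> m"
        proof (rule ccontr)
          assume "\<not> \<phi> j \<le> m"
          then have mlt: "m \<in> {..<\<phi> j}" by simp
          have "q \<in> D (\<phi> j)" using j TD by blast
          then have "q \<notin> (\<Union>m'\<in>{..<\<phi> j}. As m')" unfolding D_def by blast
          then have "q \<notin> As m" using mlt by blast
          then show False using q m by blast
        qed
        then show "q \<in> (\<Union>n\<in>{..m}. T n)" using j by blast
      qed
      moreover have "(\<Union>n\<in>{..m}. T n) \<in> conv_ideal" by (rule conv_UN) (simp_all add: Tconv)
      ultimately show ?thesis by (rule conv_subset[rotated])
    next
      case False
      obtain N where N: "\<forall>n\<ge>N. fA A n \<le> g n" using g A unfolding eventually_sequentially by blast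
      have ATfin: "finite (A \<inter> T n)" if n: "n \<ge> N" for n
      proof (rule ccontr)
        assume inf: "infinite (A \<inter> T n)"
        define I where "I = {i. t n i \<in> A}"
        have "A \<inter> T n = t n ` I" unfolding I_def T_def by blast
        then have Iinf: "infinite I" using inf by auto
        have "y n islimpt R (A \<inter> D n)"
          unfolding islimpt_approachable
        proof (intro allI impI)
          fix e :: real assume "e > 0"
          then obtain M where M: "\<forall>i\<ge>M. inverse (real (Suc i)) < e" using inv_small by blast
          obtain i where i: "i \<ge> M" "i \<in> I" using Iinf unfolding infinite_nat_iff_unbounded_le by blast
          have "inverse (real (Suc (n + i))) \<le> inverse (real (Suc i))" by (auto intro!: le_imp_inverse_le)
          then have "dist (real_of_rat (t n i)) (y n) < e" using t(3)[of n i] M[rule_format, OF i(1)] by linarith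
          moreover have "t n i \<in> A \<inter> D n" using i(2) t(1) unfolding I_def by blast
          ultimately show "\<exists>x'\<in>R (A \<inter> D n). x' \<noteq> y n \<and> dist x' (y n) < e"
            using t(2)[of n i] by blast
        qed
        then have "g' n \<in> K A n" unfolding K_def y_def by blast
        moreover have "fA A n \<le> g' n" using N[rule_format, OF n] unfolding g'_def by (simp add: le_max_iff_disj)
        ultimately show False using fAK A False by blast
      qed
      define X where "X = (A \<inter> B) - (\<Union>n\<in>{..<N}. T n)"
      have XQ: "X \<subseteq> Q01" unfolding X_def using BQ by blast
      have "X \<in> conv_ideal"
      proof (rule conv_approach[OF XQ, of w], intro allI impI)
        fix e :: real assume e: "e > 0"
        have e2: "e/2 > 0" using e by simp
        obtain J1 where J1: "\<forall>j\<ge>J1. dist (y (\<phi> j)) w < e/2" using ylim e2 unfolding LIMSEQ_def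
          by blast
        obtain J2 where J2: "\<forall>j\<ge>J2. inverse (real (Suc j)) < e/2" using inv_small[OF e2] by blast
        define J where "J = max J1 J2"
        have "{x \<in> X. e \<le> \<bar>real_of_rat x - w\<bar>} \<subseteq> (\<Union>j\<in>{j. j < J \<and> N \<le> \<phi> j}. A \<inter> T (\<phi> j))"
        proof
          fix q assume q: "q \<in> {x \<in> X. e \<le> \<bar>real_of_rat x - w\<bar>}"
          then obtain j where j: "q \<in> T (\<phi> j)" "q \<in> A" unfolding X_def B_def by blast
          have jN: "N \<le> \<phi> j"
          proof (rule ccontr)
            assume "\<not> N \<le> \<phi> j"
            then show False using q j unfolding X_def by auto
          qed
          have "j < J"
          proof (rule ccontr)
            assume "\<not> j < J"
            then have jJ: "j \<ge> J1" "\<phi> j \<ge> J2" using seq_suble[OF phi, of j] unfolding J_def by auto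
            obtain i where i: "q = t (\<phi> j) i" using j(1) unfolding T_def by blast
            have "dist (real_of_rat q) (y (\<phi> j)) < e/2" using tsmall[of "\<phi> j" i] J2[rule_format, OF jJ(2)] unfolding i by linarith
            moreover have "dist (y (\<phi> j)) w < e/2" using J1 jJ(1) by blast
            ultimately have "dist (real_of_rat q) w < e" using dist_triangle[of "real_of_rat q" w "y (\<phi> j)"]
              by linarith
            then show False using q by (simp add: dist_real_def)
          qed
          then show "q \<in> (\<Union>j\<in>{j. j < J \<and> N \<le> \<phi> j}. A \<inter> T (\<phi> j))" using jN j by blast
        qed
        moreover have "finite (\<Union>j\<in>{j. j < J \<and> N \<le> \<phi> j}. A \<inter> T (\<phi> j))"
          using ATfin by (intro finite_UN_I) auto
        ultimately show "finite {x \<in> X. e \<le> \<bar>real_of_rat x - w\<bar>}" by (rule finite_subset)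
      qed
      moreover have "(\<Union>n\<in>{..<N}. T n) \<in> conv_ideal" by (rule conv_UN) (simp_all add: Tconv)
      ultimately have "X \<union> (\<Union>n\<in>{..<N}. T n) \<in> conv_ideal" by (rule conv_Un)
      moreover have "A \<inter> B \<subseteq> X \<union> (\<Union>n\<in>{..<N}. T n)" unfolding X_def by blast
      ultimately show ?thesis by (rule conv_subset)
    qed
    have "B \<notin> \<A>"
    proof
      assume "B \<in> \<A>"
      then have "B \<inter> B \<in> conv_ideal" by (rule BA)
      then show False using Bpos by simp
    qed
    then obtain A where "A \<in> \<A>" "A \<inter> B \<notin> conv_ideal" using mx[rule_format, of B] BQ Bpos by blast
    then show False using BA by blast
  qed
  moreover have "(card_of F, card_of \<A>) \<in> ordLeq" unfolding F_def by (rule card_of_image)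
  ultimately show ?thesis by blast
qed

end
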